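(* Every Abel sequentially compact subset of $\mathbb{R}$ is slowly oscillating compact.
   Context: A sequence $(p_n)_{n\ge0}$ is Abel convergent to $\ell$ if $\sum_{k=0}^{\infty}p_k x^k$ converges for every $0\le x<1$ and $\lim_{x\to 1^-}(1-x)\sum_{k=0}^{\infty}p_k x^k=\ell$. A subset $F\subseteq\mathbb{R}$ is Abel sequentially compact if every sequence of points of $F$ has a subsequence Abel convergent to a limit belonging to $F$. A sequence $(p_n)$ is slowly oscillating if for every $\varepsilon>0$ there exist $\delta>0$ and $N$ such that $|p_m-p_n|<\varepsilon$ whenever $n\ge N$ and $n\le m\le(1+\delta)n$. A subset $E\subseteq\mathbb{R}$ is slowly oscillating compact if every sequence of points of $E$ has a slowly oscillating subsequence. *)

theory Defs
  imports "HOL-Analysis.Analysis"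
begin

definition abel_convergent :: "(nat \<Rightarrow> real) \<Rightarrow> real \<Rightarrow> bool" where
  "abel_convergent p l \<longleftrightarrow>
     (\<forall>x::real. 0 \<le> x \<and> x < 1 \<longrightarrow> summable (\<lambda>k. p k * x ^ k)) \<and>
     ((\<lambda>x::real. (1 - x) * (\<Sum>k. p k * x ^ k)) \<longlongrightarrow> l) (at_left 1)"

definition abel_seq_compact :: "real set \<Rightarrow> bool" where
  "abel_seq_compact F \<longleftrightarrow>
     (\<forall>p. (\<forall>n. p n \<in> F) \<longrightarrow>
        (\<exists>(r::nat \<Rightarrow> nat) l. strict_mono r \<and> l \<in> F \<and> abel_convergent (p \<circ> r) l))"

definition slowly_oscillating :: "(nat \<Rightarrow> real) \<Rightarrow> bool" where
  "slowly_oscillating p \<longleftrightarrow>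
     (\<forall>\<epsilon>>0. \<exists>\<delta>>0. \<exists>N. \<forall>n m. N \<le> n \<and> n \<le> m \<and> real m \<le> (1 + \<delta>) * real n
        \<longrightarrow> \<bar>p m - p n\<bar> < \<epsilon>)"

definition slowly_oscillating_compact :: "real set \<Rightarrow> bool" where
  "slowly_oscillating_compact E \<longleftrightarrow>
     (\<forall>p. (\<forall>n. p n \<in> E) \<longrightarrow>
        (\<exists>r::nat \<Rightarrow> nat. strict_mono r \<and> slowly_oscillating (p \<circ> r)))"

end

theory Submission
  imports Defs
begin

lemma abel_bounded:
  assumes A: "abel_seq_compact F"
  shows "bounded F"
proof (rule ccontr)
  assume nb: "\<not> bounded F"
  have "\<forall>n. \<exists>y. y \<in> F \<and> (2::real)^n \<le> \<bar>y\<bar>"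
  proof
    fix n :: nat
    from nb have "\<not> (\<forall>y\<in>F. \<bar>y\<bar> \<le> 2^n)"
      using nb bounded_real by blast
    thus "\<exists>y. y \<in> F \<and> (2::real)^n \<le> \<bar>y\<bar>" by (auto simp: not_le intro: less_imp_le)
  qed
  from choice[OF this] obtain p where p0: "\<forall>n. p n \<in> F \<and> (2::real)^n \<le> \<bar>p n\<bar>"
    by blast
  hence p: "\<And>n. p n \<in> F" "\<And>n. (2::real)^n \<le> \<bar>p n\<bar>" by auto
  from A p(1) obtain r l where r: "strict_mono r" and ab: "abel_convergent (p \<circ> r) l"
    unfolding abel_seq_compact_def by blast
  from ab have "summable (\<lambda>k. (p \<circ> r) k * (1/2) ^ k)"
    unfolding abel_convergent_def by auto
  hence lim: "(\<lambda>k. (p \<circ> r) k * (1/2) ^ k) \<longlonglongrightarrow> 0"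
    by (rule summable_LIMSEQ_zero)
  have ge: "1 \<le> \<bar>(p \<circ> r) k * (1/2) ^ k\<bar>" for k
  proof -
    have "k \<le> r k" using r by (simp add: strict_mono_imp_increasing)
    hence "(2::real)^k \<le> 2^(r k)" by (simp add: power_increasing)
    also have "\<dots> \<le> \<bar>p (r k)\<bar>" by (rule p(2))
    finally have "(2::real)^k \<le> \<bar>p (r k)\<bar>" .
    have eq: "\<bar>(p \<circ> r) k * (1/2) ^ k\<bar> = \<bar>p (r k)\<bar> / 2^k"
      by (simp add: abs_mult power_one_over)
    have "(0::real) < 2^k" by simp
    with \<open>(2::real)^k \<le> \<bar>p (r k)\<bar>\<close> have "1 \<le> \<bar>p (r k)\<bar> / 2^k"
      by (simp add: le_divide_eq)
    thus ?thesis using eq by simp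
  qed
  from tendsto_rabs[OF lim] have "(\<lambda>k. \<bar>(p \<circ> r) k * (1/2) ^ k\<bar>) \<longlonglongrightarrow> 0" by simp
  hence "eventually (\<lambda>k. \<bar>(p \<circ> r) k * (1/2) ^ k\<bar> < 1) sequentially"
    by (rule order_tendstoD) simp
  then obtain N where "\<forall>k\<ge>N. \<bar>(p \<circ> r) k * (1/2) ^ k\<bar> < 1"
    by (auto simp: eventually_sequentially)
  with ge[of N] show False by auto
qed

lemma convergent_slowly_oscillating:
  assumes "convergent q"
  shows "slowly_oscillating q"
  unfolding slowly_oscillating_def
proof (intro allI impI)
  fix e :: real assume e: "e > 0"
  from assms have "Cauchy q" by (simp add: convergent_Cauchy)
  then obtain N where N: "\<And>m n. m \<ge> N \<Longrightarrow> n \<ge> N \<Longrightarrow> dist (q m) (q n) < e"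
    using e unfolding Cauchy_def by blast
  show "\<exists>\<delta>>0. \<exists>N. \<forall>n m. N \<le> n \<and> n \<le> m \<and> real m \<le> (1 + \<delta>) * real n \<longrightarrow> \<bar>q m - q n\<bar> < e"
  proof (rule exI[of _ 1], rule conjI)
    show "(1::real) > 0" by simp
    show "\<exists>N. \<forall>n m. N \<le> n \<and> n \<le> m \<and> real m \<le> (1 + 1) * real n \<longrightarrow> \<bar>q m - q n\<bar> < e"
    proof (rule exI[of _ N], intro allI impI)
    fix n m assume h: "N \<le> n \<and> n \<le> m \<and> real m \<le> (1 + 1) * real n"
    hence "dist (q m) (q n) < e" using N[of m n] by linarith
    thus "\<bar>q m - q n\<bar> < e" by (simp add: dist_real_def)
    qed
  qed
qed

theorem corollary17:
  fixes F :: "real set"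
  assumes "abel_seq_compact F"
  shows "slowly_oscillating_compact F"
  unfolding slowly_oscillating_compact_def
proof (intro allI impI)
  fix p :: "nat \<Rightarrow> real" assume pF: "\<forall>n. p n \<in> F"
  have bF: "bounded F" using abel_bounded[OF assms] .
  then obtain M where M: "\<And>y. y \<in> F \<Longrightarrow> \<bar>y\<bar> \<le> M" by (metis bounded_real)
  obtain f where f: "strict_mono f" "monoseq (\<lambda>n. p (f n))" using seq_monosub by blast
  have "Bseq (\<lambda>n. p (f n))"
    using M pF by (intro BseqI'[of _ M]) auto
  hence "convergent (\<lambda>n. p (f n))" using f(2) Bseq_monoseq_convergent by blast
  hence "slowly_oscillating (p \<circ> f)" using convergent_slowly_oscillating by (simp add: o_def)
  thus "\<exists>r. strict_mono r \<and> slowly_oscillating (p \<circ> r)" using f(1) by blast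
qed

end
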